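(* For a symbolic generalized matrix chain of $n$ matrices, the set of fanning-out variants $\mathcal{E}=\{E^0,E^1,\ldots,E^n\}$ has finite total penalty, i.e. $P(\mathcal{E})=\sup_{\boldsymbol{q}\in\mathbb{N}^{n+1}}P(\mathcal{E},\boldsymbol{q})<\infty$.
   Context: A generalized matrix chain (GMC) is a product $\mathrm{op}(M_1)\cdots\mathrm{op}(M_n)$ where $M_i$ has size $q_{i-1}\times q_i$, $\mathrm{op}(M)\in\{M,M^T,M^{-1},M^{-T}\}$, and each $M_i$ carries a structure (general, symmetric, lower-/upper-triangular; non-general structures imply squareness) and a property (singular, invertible, symmetric positive-definite, orthogonal). The shape is fixed and sizes are symbolic. An instance is $\boldsymbol{q}=(q_0,\ldots,q_n)\in\mathbb{N}^{n+1}$ consistent with the shape ($q_{i-1}=q_i$ whenever $M_i$ is necessarily square, i.e. non-general or inverted); the supremum ranges over such instances. Transposition is ignored. Each parenthesization determines exactly one variant: a sequence of $n-1$ associations $(K_i,(a_i,b_i,c_i))$, $0\le a_i<b_i<c_i\le n$, the $i$-th combining via kernel $K_i$ operands of sizes $q_{a_i}\times q_{b_i}$ and $q_{b_i}\times q_{c_i}$. It is built by performing the leftmost available association first and, per association: propagating an inversion to the result when both operands are inverted ($X^{-1}Y^{-1}=(YX)^{-1}$) or when one operand is inverted and general/symmetric while the other is orthogonal or non-singular triangular; assigning the most specialized matrix-product kernel (GEMM, SYMM, TRMM, SYSYMM, TRSYMM, TRTRMM) or linear-solve kernel (GEGESV, GESYSV, GETRSV, SYGESV, SYSYSV, SYTRSV,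 POGESV, POSYSV, POTRSV, TRSM, TRSYSV, TRTRSV; the inverted operand is the coefficient matrix); and inferring the features and sizes of the result by fixed rules. $\mathcal{A}$ is the set of all variants (one per parenthesization). The cost (FLOPs) of variant $A$ on $\boldsymbol{q}$ is $T(A,\boldsymbol{q})=\sum_{(K,(a,b,c))\in A}\phi_K(q_a,q_b,q_c)$, where each kernel cost has one of the forms, with positive kernel-specific constants: Type I $\beta abc$; Type IIa $\beta_1a^3+\beta_2a^2c$; Type IIb $\beta_1c^3+\beta_2c^2a$. Type II kernels are exactly the solves with a non-triangular coefficient matrix and general right-hand side (GEGESV: $\beta_1=2/3,\beta_2=2$; SYGESV, POGESV: $\beta_1=1/3,\beta_2=2$), IIa with the coefficient on the left ($a=b$), IIb on the right ($b=c$); all other kernels are Type I. Fanning-out variant $E^h$ ($h\in\{0,\ldots,n\}$): the variant of $(M_1(\cdots(M_{h-1}M_h)\cdots))((\cdots(M_{h+1}M_{h+2})\cdots)M_n)$, computing the prefix $M_1\cdots M_h$ right-to-left, the suffix $M_{h+1}\cdots M_n$ left-to-right, then associating the two results. Penalty: for $\mathcal{Z}\subseteq\mathcal{A}$ nonempty, $P(\mathcal{Z},\boldsymbol{q})=\frac{\min_{Z\in\mathcal{Z}}T(Z,\boldsymbol{q})}{\min_{A\in\mathcal{A}}T(A,\boldsymbol{q})}-1$ (with $P(\emptyset,\boldsymbol{q})=\infty$), and total penalty $P(\mathcal{Z})=\sup_{\boldsymbol{q}}P(\mathcal{Z},\boldsymbol{q})$. *)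

theory Defs
  imports Complex_Main
begin

datatype mstruct = General | Symmetric | LowerTri | UpperTri
datatype mprop = Singular | Invertible | SPD | Orthogonal

text \<open>An operand: mstruct, mprop, and whether it appears inverted
  (transposition is ignored).\<close>
datatype operand = Op (st: mstruct) (pr: mprop) (inv: bool)

definition is_tri :: "mstruct \<Rightarrow> bool" where
  "is_tri s \<longleftrightarrow> s = LowerTri \<or> s = UpperTri"

text \<open>Necessarily square: non-general, inverted, or having a mprop
  (invertible, SPD, orthogonal) that only square matrices can have.\<close>
definition nec_square :: "operand \<Rightarrow> bool" where
  "nec_square x \<longleftrightarrow> st x \<noteq> General \<or> inv x \<or> pr x \<noteq> Singular"

definition valid_operand :: "operand \<Rightarrow> bool" where
  "valid_operand x \<longleftrightarrow> (inv x \<longrightarrow> pr x \<noteq> Singular) \<and> (pr x = SPD \<longrightarrow> st x = Symmetric)"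

definition valid_shape :: "(nat \<Rightarrow> operand) \<Rightarrow> nat \<Rightarrow> bool" where
  "valid_shape sh n \<longleftrightarrow> (\<forall>i\<in>{1..n}. valid_operand (sh i))"

definition consistent :: "(nat \<Rightarrow> operand) \<Rightarrow> nat \<Rightarrow> (nat \<Rightarrow> nat) \<Rightarrow> bool" where
  "consistent sh n q \<longleftrightarrow> (\<forall>i\<in>{0..n}. q i > 0) \<and>
     (\<forall>i\<in>{1..n}. nec_square (sh i) \<longrightarrow> q (i - 1) = q i)"

datatype kernel = GEMM | SYMM | TRMM | SYSYMM | TRSYMM | TRTRMM
  | GEGESV | GESYSV | GETRSV | SYGESV | SYSYSV | SYTRSV
  | POGESV | POSYSV | POTRSV | TRSM | TRSYSV | TRTRSV

definition mm_kernel :: "mstruct \<Rightarrow> mstruct \<Rightarrow> kernel" where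
  "mm_kernel s1 s2 =
    (if is_tri s1 \<and> is_tri s2 then TRTRMM
     else if (is_tri s1 \<and> s2 = Symmetric) \<or> (s1 = Symmetric \<and> is_tri s2) then TRSYMM
     else if is_tri s1 \<or> is_tri s2 then TRMM
     else if s1 = Symmetric \<and> s2 = Symmetric then SYSYMM
     else if s1 = Symmetric \<or> s2 = Symmetric then SYMM
     else GEMM)"

text \<open>Most specialized linear-solve kernel: coefficient operand c, right-hand
  side of mstruct r.\<close>
definition sv_kernel :: "operand \<Rightarrow> mstruct \<Rightarrow> kernel" where
  "sv_kernel c r =
    (if is_tri (st c) then (if r = General then TRSM else if r = Symmetric then TRSYSV else TRTRSV)
     else if pr c = SPD then (if r = General then POGESV else if r = Symmetric then POSYSV else POTRSV)
     else if st c = Symmetric then (if r = General then SYGESV else if r = Symmetric then SYSYSV else SYTRSV)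
     else (if r = General then GEGESV else if r = Symmetric then GESYSV else GETRSV))"

definition type2 :: "kernel \<Rightarrow> bool" where
  "type2 K \<longleftrightarrow> K \<in> {GEGESV, SYGESV, POGESV}"

definition beta1 :: "kernel \<Rightarrow> real" where
  "beta1 K = (if K = GEGESV then 2/3 else 1/3)"

definition beta2 :: "kernel \<Rightarrow> real" where
  "beta2 K = 2"

text \<open>Cost of one association with kernel K; \<open>left\<close> says whether the
  coefficient matrix of a solve is the left operand (Type IIa) or the right one
  (Type IIb).\<close>
definition phi :: "(kernel \<Rightarrow> real) \<Rightarrow> kernel \<Rightarrow> bool \<Rightarrow> real \<Rightarrow> real \<Rightarrow> real \<Rightarrow> real" where
  "phi \<beta> K left a b c =
    (if type2 K then
       (if left then beta1 K * a ^ 3 + beta2 K * a\<^sup>2 * c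
        else beta1 K * c ^ 3 + beta2 K * c\<^sup>2 * a)
     else \<beta> K * a * b * c)"

definition prod_struct :: "mstruct \<Rightarrow> mstruct \<Rightarrow> mstruct" where
  "prod_struct s1 s2 =
    (if s1 = LowerTri \<and> s2 = LowerTri then LowerTri
     else if s1 = UpperTri \<and> s2 = UpperTri then UpperTri else General)"

definition prod_prop :: "mprop \<Rightarrow> mprop \<Rightarrow> mprop" where
  "prod_prop p1 p2 =
    (if p1 = Orthogonal \<and> p2 = Orthogonal then Orthogonal
     else if p1 \<noteq> Singular \<and> p2 \<noteq> Singular then Invertible else Singular)"

text \<open>Operand that lets an inversion propagate: orthogonal or non-singular triangular.\<close>
definition prop_partner :: "operand \<Rightarrow> bool" where
  "prop_partner y \<longleftrightarrow> \<not> inv y \<and> (pr y = Orthogonal \<or> (is_tri (st y) \<and> pr y \<noteq> Singular))"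

definition gen_or_sym :: "operand \<Rightarrow> bool" where
  "gen_or_sym x \<longleftrightarrow> st x = General \<or> st x = Symmetric"

text \<open>Associate X (left) with Y (right): result operand, kernel, and whether the
  coefficient (if a solve) is on the left.\<close>
definition combine :: "operand \<Rightarrow> operand \<Rightarrow> operand \<times> kernel \<times> bool" where
  "combine X Y =
    (if inv X \<and> inv Y then
       \<comment> \<open>\<open>X\<^sup>-\<^sup>1 Y\<^sup>-\<^sup>1 = (Y X)\<^sup>-\<^sup>1\<close>\<close>
       (Op (prod_struct (st Y) (st X)) (prod_prop (pr Y) (pr X)) True,
        mm_kernel (st Y) (st X), False)
     else if inv X \<and> gen_or_sym X \<and> prop_partner Y then
       \<comment> \<open>\<open>X\<^sup>-\<^sup>1 Y = (Y\<^sup>-\<^sup>1 X)\<^sup>-\<^sup>1\<close>\<close>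
       (Op (prod_struct (st Y) (st X)) (prod_prop (pr Y) (pr X)) True,
        (if pr Y = Orthogonal then mm_kernel (st Y) (st X) else sv_kernel Y (st X)), True)
     else if inv Y \<and> gen_or_sym Y \<and> prop_partner X then
       \<comment> \<open>\<open>X Y\<^sup>-\<^sup>1 = (Y X\<^sup>-\<^sup>1)\<^sup>-\<^sup>1\<close>\<close>
       (Op (prod_struct (st Y) (st X)) (prod_prop (pr Y) (pr X)) True,
        (if pr X = Orthogonal then mm_kernel (st Y) (st X) else sv_kernel X (st Y)), False)
     else if inv X then
       (Op (prod_struct (st X) (st Y)) (prod_prop (pr X) (pr Y)) False, sv_kernel X (st Y), True)
     else if inv Y then
       (Op (prod_struct (st X) (st Y)) (prod_prop (pr X) (pr Y)) False, sv_kernel Y (st X), False)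
     else
       (Op (prod_struct (st X) (st Y)) (prod_prop (pr X) (pr Y)) False, mm_kernel (st X) (st Y), False))"

text \<open>\<open>Leaf k\<close> is the matrix \<open>M_k\<close> (sizes \<open>q_(k-1) \<times> q_k\<close>).\<close>
datatype ptree = Leaf nat | Node ptree ptree

fun lo :: "ptree \<Rightarrow> nat" where
  "lo (Leaf k) = k - 1"
| "lo (Node l r) = lo l"

fun hi :: "ptree \<Rightarrow> nat" where
  "hi (Leaf k) = k"
| "hi (Node l r) = hi r"

fun wf_tree :: "ptree \<Rightarrow> bool" where
  "wf_tree (Leaf k) \<longleftrightarrow> k \<ge> 1"
| "wf_tree (Node l r) \<longleftrightarrow> wf_tree l \<and> wf_tree r \<and> hi l = lo r"

text \<open>An association: kernel, coefficient-on-left flag, and indices (a,b,c).\<close>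
type_synonym assoc = "kernel \<times> bool \<times> nat \<times> nat \<times> nat"

text \<open>Evaluate a parenthesization: result operand and the variant, i.e. the
  sequence of associations (left subtree first, which is the leftmost-available
  order).\<close>
fun eval :: "(nat \<Rightarrow> operand) \<Rightarrow> ptree \<Rightarrow> operand \<times> assoc list" where
  "eval sh (Leaf k) = (sh k, [])"
| "eval sh (Node l r) =
    (let (x, al) = eval sh l; (y, ar) = eval sh r; (z, K, left) = combine x y
     in (z, al @ ar @ [(K, left, lo l, hi l, hi r)]))"

definition variant :: "(nat \<Rightarrow> operand) \<Rightarrow> ptree \<Rightarrow> assoc list" where
  "variant sh t = snd (eval sh t)"

definition all_variants :: "(nat \<Rightarrow> operand) \<Rightarrow> nat \<Rightarrow> assoc list set" where
  "all_variants sh n = {variant sh t | t. wf_tree t \<and> lo t = 0 \<and> hi t = n}"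

fun rtl :: "nat \<Rightarrow> nat \<Rightarrow> ptree" where
  "rtl i 0 = Leaf i"
| "rtl i (Suc k) = Node (Leaf i) (rtl (Suc i) k)"

fun ltr :: "nat \<Rightarrow> nat \<Rightarrow> ptree" where
  "ltr i 0 = Leaf i"
| "ltr i (Suc k) = Node (ltr i k) (Leaf (i + Suc k))"

definition fanout :: "nat \<Rightarrow> nat \<Rightarrow> ptree" where
  "fanout n h =
    (if h = 0 then ltr 1 (n - 1)
     else if h = n then rtl 1 (n - 1)
     else Node (rtl 1 (h - 1)) (ltr (h + 1) (n - h - 1)))"

definition fanout_variants :: "(nat \<Rightarrow> operand) \<Rightarrow> nat \<Rightarrow> assoc list set" where
  "fanout_variants sh n = {variant sh (fanout n h) | h. h \<le> n}"

definition cost :: "(kernel \<Rightarrow> real) \<Rightarrow> (nat \<Rightarrow> nat) \<Rightarrow> assoc list \<Rightarrow> real" where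
  "cost \<beta> q A = (\<Sum>(K, left, a, b, c) \<leftarrow> A. phi \<beta> K left (real (q a)) (real (q b)) (real (q c)))"

definition penalty :: "(kernel \<Rightarrow> real) \<Rightarrow> (nat \<Rightarrow> nat) \<Rightarrow> assoc list set \<Rightarrow> assoc list set \<Rightarrow> real" where
  "penalty \<beta> q Z A = Min (cost \<beta> q ` Z) / Min (cost \<beta> q ` A) - 1"

end

theory Submission
  imports Defs
begin


lemma UNIV_kernel: "(UNIV :: kernel set) = {GEMM, SYMM, TRMM, SYSYMM, TRSYMM, TRTRMM, GEGESV, GESYSV, GETRSV, SYGESV, SYSYSV, SYTRSV, POGESV, POSYSV, POTRSV, TRSM, TRSYSV, TRTRSV}"
proof -
  { fix x :: kernel have "x \<in> {GEMM, SYMM, TRMM, SYSYMM, TRSYMM, TRTRMM, GEGESV, GESYSV, GETRSV, SYGESV, SYSYSV, SYTRSV, POGESV, POSYSV, POTRSV, TRSM, TRSYSV, TRTRSV}"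
      by (cases x) auto }
  thus ?thesis by auto
qed

lemma finite_kernel: "finite (UNIV :: kernel set)" by (simp add: UNIV_kernel)

definition c0 :: "(kernel \<Rightarrow> real) \<Rightarrow> real" where "c0 \<beta> = min 2 (Min (range \<beta>))"
definition c1 :: "(kernel \<Rightarrow> real) \<Rightarrow> real" where "c1 \<beta> = min (c0 \<beta>) (1/3)"
definition Bm :: "(kernel \<Rightarrow> real) \<Rightarrow> real" where "Bm \<beta> = max 2 (Max (range \<beta>))"

lemma c0_pos: assumes "\<forall>K. \<beta> K > 0" shows "c0 \<beta> > 0"
proof -
  have "Min (range \<beta>) \<in> range \<beta>" using finite_kernel by (intro Min_in) auto
  thus ?thesis using assms by (auto simp: c0_def)
qed

lemma c0_le: "c0 \<beta> \<le> \<beta> K" "c0 \<beta> \<le> 2"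
proof -
  have "Min (range \<beta>) \<le> \<beta> K" using finite_kernel by (intro Min_le) auto
  thus "c0 \<beta> \<le> \<beta> K" by (auto simp: c0_def)
  show "c0 \<beta> \<le> 2" by (auto simp: c0_def)
qed

lemma c1_pos: assumes "\<forall>K. \<beta> K > 0" shows "c1 \<beta> > 0" "c1 \<beta> \<le> c0 \<beta>" "c1 \<beta> \<le> 1/3"
  using c0_pos[OF assms] by (auto simp: c1_def)

lemma Bm_ge: "\<beta> K \<le> Bm \<beta>" "2 \<le> Bm \<beta>"
proof -
  have "\<beta> K \<le> Max (range \<beta>)" using finite_kernel by (intro Max_ge) auto
  thus "\<beta> K \<le> Bm \<beta>" by (auto simp: Bm_def)
  show "2 \<le> Bm \<beta>" by (auto simp: Bm_def)
qed

lemma beta1_bounds: "1/3 \<le> beta1 K" "beta1 K \<le> 2" by (auto simp: beta1_def)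

lemma C1: "nec_square (fst (combine X Y)) \<Longrightarrow> nec_square X \<and> nec_square Y"
  unfolding combine_def nec_square_def prod_struct_def prod_prop_def prop_partner_def
  by (auto split: if_splits)

lemma C2: "combine X Y = (z, K, True) \<Longrightarrow> type2 K \<Longrightarrow> inv X \<and> \<not> is_tri (st X)"
  unfolding combine_def type2_def sv_kernel_def mm_kernel_def prop_partner_def
  by (auto split: if_splits)

lemma C3: "combine X Y = (z, K, False) \<Longrightarrow> type2 K \<Longrightarrow> inv Y \<and> \<not> is_tri (st Y)"
  unfolding combine_def type2_def sv_kernel_def mm_kernel_def prop_partner_def
  by (auto split: if_splits)

lemma C4: "combine X Y = (z, K, l) \<Longrightarrow> inv X \<Longrightarrow> \<not> is_tri (st X) \<Longrightarrow> \<not> type2 K \<Longrightarrow> nec_square Y"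
  unfolding combine_def type2_def sv_kernel_def mm_kernel_def prop_partner_def nec_square_def
  by (auto split: if_splits)

lemma C5: "combine X Y = (z, K, l) \<Longrightarrow> inv Y \<Longrightarrow> \<not> is_tri (st Y) \<Longrightarrow> \<not> type2 K \<Longrightarrow> nec_square X"
  unfolding combine_def type2_def sv_kernel_def mm_kernel_def prop_partner_def nec_square_def
  by (auto split: if_splits)




lemma phi_nonneg: assumes "\<forall>K. \<beta> K > 0" "0 \<le> a" "0 \<le> b" "0 \<le> c"
  shows "0 \<le> phi \<beta> K l a b c"
proof -
  have "0 \<le> beta1 K" using beta1_bounds(1)[of K] by linarith
  moreover have "0 \<le> \<beta> K" using assms(1) by (simp add: less_imp_le)
  ultimately show ?thesis using assms(2-4) by (auto simp: phi_def beta2_def)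
qed

lemma phi_ub: assumes "0 \<le> a" "0 \<le> b" "0 \<le> c"
  shows "phi \<beta> K l a b c \<le> Bm \<beta> * (if type2 K then (if l then a^3 + a\<^sup>2*c else c^3 + c\<^sup>2*a) else a*b*c)"
proof -
  have b1: "beta1 K \<le> Bm \<beta>" using beta1_bounds(2)[of K] Bm_ge(2)[of \<beta>] by linarith
  have b2: "2 \<le> Bm \<beta>" by (rule Bm_ge(2))
  have b3: "\<beta> K \<le> Bm \<beta>" by (rule Bm_ge(1))
  have p: "0 \<le> a^3" "0 \<le> a\<^sup>2*c" "0 \<le> c^3" "0 \<le> c\<^sup>2*a" "0 \<le> a*b*c" using assms by auto
  show ?thesis
  proof (cases "type2 K")
    case True
    show ?thesis
    proof (cases l)
      case True
      have "beta1 K * a^3 \<le> Bm \<beta> * a^3" by (rule mult_right_mono[OF b1 p(1)])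
      moreover have "2 * a\<^sup>2*c \<le> Bm \<beta> * (a\<^sup>2*c)" using mult_right_mono[OF b2 p(2)] by simp
      ultimately show ?thesis using \<open>type2 K\<close> True by (simp add: phi_def beta2_def algebra_simps)
    next
      case False
      have "beta1 K * c^3 \<le> Bm \<beta> * c^3" by (rule mult_right_mono[OF b1 p(3)])
      moreover have "2 * c\<^sup>2*a \<le> Bm \<beta> * (c\<^sup>2*a)" using mult_right_mono[OF b2 p(4)] by simp
      ultimately show ?thesis using \<open>type2 K\<close> False by (simp add: phi_def beta2_def algebra_simps)
    qed
  next
    case False
    have "\<beta> K * (a*b*c) \<le> Bm \<beta> * (a*b*c)" by (rule mult_right_mono[OF b3 p(5)])
    thus ?thesis using False by (simp add: phi_def mult.assoc)
  qed
qed

lemma phi_lb: assumes pos: "\<forall>K. \<beta> K > 0" and cb: "combine X Y = (z,K,lf)"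
  and sx: "nec_square X \<Longrightarrow> a = b" and sy: "nec_square Y \<Longrightarrow> b = c"
  and nn: "0 \<le> a" "0 \<le> b" "0 \<le> c"
  shows "c0 \<beta> * a*b*c \<le> phi \<beta> K lf a b c"
proof -
  have abc: "0 \<le> a*b*c" using nn by auto
  have c02: "c0 \<beta> * (a*b*c) \<le> 2 * (a*b*c)" by (rule mult_right_mono[OF c0_le(2) abc])
  have b1: "0 \<le> beta1 K" using beta1_bounds(1)[of K] by linarith
  show ?thesis
  proof (cases "type2 K")
    case T: True
    show ?thesis
    proof (cases lf)
      case True
      have "inv X" using C2[of X Y z K] cb T True by simp
      hence "a = b" using sx by (simp add: nec_square_def)
      moreover have "0 \<le> beta1 K * a^3" using b1 nn by simp
      ultimately show ?thesis using T True c02 by (simp add: phi_def beta2_def power2_eq_square algebra_simps)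
    next
      case False
      have "inv Y" using C3[of X Y z K] cb T False by simp
      hence "b = c" using sy by (simp add: nec_square_def)
      moreover have "0 \<le> beta1 K * c^3" using b1 nn by simp
      ultimately show ?thesis using T False c02 by (simp add: phi_def beta2_def power2_eq_square algebra_simps)
    qed
  next
    case False
    have "c0 \<beta> * (a*b*c) \<le> \<beta> K * (a*b*c)" by (rule mult_right_mono[OF c0_le(1) abc])
    thus ?thesis using False by (simp add: phi_def mult.assoc)
  qed
qed

lemma phi_lbX: assumes pos: "\<forall>K. \<beta> K > 0" and cb: "combine X Y = (z,K,lf)"
  and ix: "inv X" "\<not> is_tri (st X)" and ab: "a = b" and sy: "nec_square Y \<Longrightarrow> b = c"
  and nn: "0 \<le> a" "0 \<le> b" "0 \<le> c"
  shows "c1 \<beta> * a^3 \<le> phi \<beta> K lf a b c"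
proof -
  have a3: "0 \<le> a^3" using nn by simp
  have b1: "c1 \<beta> * a^3 \<le> beta1 K * a^3"
    using mult_right_mono[OF _ a3, of "c1 \<beta>" "beta1 K"] c1_pos[OF pos] beta1_bounds(1)[of K] by linarith
  have c1c0: "c1 \<beta> * a^3 \<le> c0 \<beta> * a^3" using mult_right_mono[OF c1_pos(2)[OF pos] a3] .
  have b1p: "0 \<le> beta1 K" using beta1_bounds(1)[of K] by linarith
  show ?thesis
  proof (cases "type2 K")
    case T: True
    show ?thesis
    proof (cases lf)
      case True
      have "0 \<le> 2 * a\<^sup>2 * c" using nn by simp
      moreover have "phi \<beta> K lf a b c = beta1 K * a^3 + 2 * a\<^sup>2 * c" using T True by (simp add: phi_def beta2_def)
      ultimately show ?thesis using b1 by linarith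
    next
      case False
      have "inv Y" using C3[of X Y z K] cb T False by simp
      hence "b = c" using sy by (simp add: nec_square_def)
      hence "a = c" using ab by simp
      moreover have "0 \<le> 2 * c\<^sup>2 * a" using nn by simp
      moreover have "phi \<beta> K lf a b c = beta1 K * c^3 + 2 * c\<^sup>2 * a" using T False by (simp add: phi_def beta2_def)
      ultimately show ?thesis using b1 by (simp add: power2_eq_square power3_eq_cube algebra_simps)
    qed
  next
    case False
    with C4 cb ix have "nec_square Y" by blast
    hence "a = c" using sy ab by simp
    have "c0 \<beta> * a^3 \<le> \<beta> K * a^3" by (rule mult_right_mono[OF c0_le(1) a3])
    thus ?thesis using False \<open>a = c\<close> ab c1c0 by (simp add: phi_def power3_eq_cube mult.assoc)
  qed
qed

lemma phi_lbY: assumes pos: "\<forall>K. \<beta> K > 0" and cb: "combine X Y = (z,K,lf)"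
  and iy: "inv Y" "\<not> is_tri (st Y)" and bc: "b = c" and sx: "nec_square X \<Longrightarrow> a = b"
  and nn: "0 \<le> a" "0 \<le> b" "0 \<le> c"
  shows "c1 \<beta> * c^3 \<le> phi \<beta> K lf a b c"
proof -
  have a3: "0 \<le> c^3" using nn by simp
  have b1: "c1 \<beta> * c^3 \<le> beta1 K * c^3"
    using mult_right_mono[OF _ a3, of "c1 \<beta>" "beta1 K"] c1_pos[OF pos] beta1_bounds(1)[of K] by linarith
  have c1c0: "c1 \<beta> * c^3 \<le> c0 \<beta> * c^3" using mult_right_mono[OF c1_pos(2)[OF pos] a3] .
  show ?thesis
  proof (cases "type2 K")
    case T: True
    show ?thesis
    proof (cases lf)
      case True
      have "inv X" using C2[of X Y z K] cb T True by simp
      hence "a = b" using sx by (simp add: nec_square_def)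
      hence "a = c" using bc by simp
      moreover have "0 \<le> 2 * a\<^sup>2 * c" using nn by simp
      moreover have "phi \<beta> K lf a b c = beta1 K * a^3 + 2 * a\<^sup>2 * c" using T True by (simp add: phi_def beta2_def)
      ultimately show ?thesis using b1 by (simp add: power2_eq_square power3_eq_cube algebra_simps)
    next
      case False
      have "0 \<le> 2 * c\<^sup>2 * a" using nn by simp
      moreover have "phi \<beta> K lf a b c = beta1 K * c^3 + 2 * c\<^sup>2 * a" using T False by (simp add: phi_def beta2_def)
      ultimately show ?thesis using b1 by linarith
    qed
  next
    case False
    with C5 cb iy have "nec_square X" by blast
    hence "a = c" using sx bc by simp
    have "c0 \<beta> * c^3 \<le> \<beta> K * c^3" by (rule mult_right_mono[OF c0_le(1) a3])
    thus ?thesis using False \<open>a = c\<close> bc c1c0 by (simp add: phi_def power3_eq_cube mult.assoc)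
  qed
qed




lemma lo_lt_hi: "wf_tree t \<Longrightarrow> lo t < hi t" by (induction t) auto

lemma eval_Node_fst: "fst (eval sh (Node l r)) = fst (combine (fst (eval sh l)) (fst (eval sh r)))"
  by (simp add: split_beta)

lemma variant_Node: "combine (fst (eval sh l)) (fst (eval sh r)) = (z, K, lf) \<Longrightarrow>
   variant sh (Node l r) = variant sh l @ variant sh r @ [(K, lf, lo l, hi l, hi r)]"
  by (simp add: variant_def split_beta)

lemma variant_Leaf[simp]: "variant sh (Leaf k) = []" by (simp add: variant_def)

lemma cost_append[simp]: "cost \<beta> q (xs @ ys) = cost \<beta> q xs + cost \<beta> q ys"
  by (simp add: cost_def)

lemma cost_single[simp]: "cost \<beta> q [(K, lf, a, b, c)] = phi \<beta> K lf (real (q a)) (real (q b)) (real (q c))"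
  by (simp add: cost_def)

lemma cost_Nil[simp]: "cost \<beta> q [] = 0" by (simp add: cost_def)

lemma cost_nonneg: assumes "\<forall>K. \<beta> K > 0" shows "0 \<le> cost \<beta> q xs"
proof (induction xs)
  case Nil then show ?case by simp
next
  case (Cons x xs)
  obtain K lf a b c where x: "x = (K, lf, a, b, c)" by (cases x) auto
  have "0 \<le> phi \<beta> K lf (real (q a)) (real (q b)) (real (q c))"
    by (rule phi_nonneg[OF assms]) auto
  moreover have "cost \<beta> q (x # xs) = phi \<beta> K lf (real (q a)) (real (q b)) (real (q c)) + cost \<beta> q xs"
    using x by (simp add: cost_def)
  ultimately show ?case using Cons by simp
qed

lemma square_inv: assumes "consistent sh n q"
  shows "wf_tree t \<Longrightarrow> hi t \<le> n \<Longrightarrow> nec_square (fst (eval sh t)) \<Longrightarrow> q (lo t) = q (hi t)"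
proof (induction t)
  case (Leaf k)
  then show ?case using assms by (auto simp: consistent_def)
next
  case (Node l r)
  have w: "wf_tree l" "wf_tree r" "hi l = lo r" using Node.prems by auto
  have "hi l \<le> n" using lo_lt_hi[OF w(2)] w(3) Node.prems by auto
  moreover have "hi r \<le> n" using Node.prems by simp
  moreover have "nec_square (fst (combine (fst (eval sh l)) (fst (eval sh r))))"
    using Node.prems(3) by (simp only: eval_Node_fst)
  hence ns: "nec_square (fst (eval sh l)) \<and> nec_square (fst (eval sh r))" by (rule C1)
  ultimately have "q (lo l) = q (hi l)" "q (lo r) = q (hi r)"
    using Node.IH(1)[OF w(1)] Node.IH(2)[OF w(2)] by blast+
  thus ?case using w(3) by simp
qed

lemma variant_length_idx: "wf_tree t \<Longrightarrow> length (variant sh t) + lo t + 1 = hi t \<and>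
   (\<forall>x \<in> set (variant sh t). case x of (K, lf, a, b, c) \<Rightarrow> a \<le> hi t \<and> b \<le> hi t \<and> c \<le> hi t)"
proof (induction t)
  case (Leaf k) then show ?case by simp
next
  case (Node l r)
  obtain z K lf where cb: "combine (fst (eval sh l)) (fst (eval sh r)) = (z, K, lf)" by (cases "combine (fst (eval sh l)) (fst (eval sh r))") auto
  have w: "wf_tree l" "wf_tree r" "hi l = lo r" using Node.prems by auto
  have lt: "lo l < hi l" "lo r < hi r" using lo_lt_hi[OF w(1)] lo_lt_hi[OF w(2)] by auto
  have IHl: "length (variant sh l) + lo l + 1 = hi l"
    "\<forall>x \<in> set (variant sh l). case x of (K, lf, a, b, c) \<Rightarrow> a \<le> hi l \<and> b \<le> hi l \<and> c \<le> hi l"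
    using Node.IH(1) w by auto
  have IHr: "length (variant sh r) + lo r + 1 = hi r"
    "\<forall>x \<in> set (variant sh r). case x of (K, lf, a, b, c) \<Rightarrow> a \<le> hi r \<and> b \<le> hi r \<and> c \<le> hi r"
    using Node.IH(2) w by auto
  have "length (variant sh (Node l r)) + lo (Node l r) + 1 = hi (Node l r)"
    unfolding variant_Node[OF cb] using IHl(1) IHr(1) w(3) lt by simp
  moreover have "\<forall>x \<in> set (variant sh (Node l r)). case x of (K, lf, a, b, c) \<Rightarrow> a \<le> hi (Node l r) \<and> b \<le> hi (Node l r) \<and> c \<le> hi (Node l r)"
  proof
    fix x assume "x \<in> set (variant sh (Node l r))"
    hence "x \<in> set (variant sh l) \<or> x \<in> set (variant sh r) \<or> x = (K, lf, lo l, hi l, hi r)"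
      unfolding variant_Node[OF cb] by auto
    moreover have "hi l \<le> hi r" "lo l \<le> hi r" using lt w(3) by auto
    ultimately show "case x of (K, lf, a, b, c) \<Rightarrow> a \<le> hi (Node l r) \<and> b \<le> hi (Node l r) \<and> c \<le> hi (Node l r)"
      using IHl(2) IHr(2) by (auto split: prod.splits)
  qed
  ultimately show ?case by blast
qed




lemma mono4: "0 \<le> (c::real) \<Longrightarrow> 0 \<le> x \<Longrightarrow> 0 \<le> y \<Longrightarrow> m \<le> z \<Longrightarrow> c*x*y*m \<le> c*x*y*z"
  by (intro mult_left_mono) auto

lemma cost_Node_parts: assumes pos: "\<forall>K. \<beta> K > 0"
  and cb: "combine (fst (eval sh l)) (fst (eval sh r)) = (z, K, lf)"
  shows "cost \<beta> q (variant sh l) \<le> cost \<beta> q (variant sh (Node l r))"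
    "cost \<beta> q (variant sh r) \<le> cost \<beta> q (variant sh (Node l r))"
    "phi \<beta> K lf (real (q (lo l))) (real (q (hi l))) (real (q (hi r))) \<le> cost \<beta> q (variant sh (Node l r))"
  using cost_nonneg[OF pos, of q "variant sh l"] cost_nonneg[OF pos, of q "variant sh r"]
    phi_nonneg[OF pos, of "real (q (lo l))" "real (q (hi l))" "real (q (hi r))" K lf]
  unfolding variant_Node[OF cb] by auto

lemma LB_leaf:
  assumes pos: "\<forall>K. \<beta> K > 0" and cons: "consistent sh n q" and mn: "\<forall>j\<le>n. q m \<le> q j"
  shows "wf_tree t \<Longrightarrow> hi t \<le> n \<Longrightarrow> lo t < i \<Longrightarrow> i \<le> hi t \<Longrightarrow> t \<noteq> Leaf i \<Longrightarrow>
    c0 \<beta> * real (q (i-1)) * real (q i) * real (q m) \<le> cost \<beta> q (variant sh t) \<and>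
    (inv (sh i) \<and> \<not> is_tri (st (sh i)) \<longrightarrow> c1 \<beta> * real (q i)^3 \<le> cost \<beta> q (variant sh t))"
proof (induction t)
  case (Leaf k)
  then show ?case by auto
next
  case (Node l r)
  obtain z K lf where cb: "combine (fst (eval sh l)) (fst (eval sh r)) = (z, K, lf)"
    by (cases "combine (fst (eval sh l)) (fst (eval sh r))") auto
  have w: "wf_tree l" "wf_tree r" "hi l = lo r" using Node.prems by auto
  have lt: "lo l < hi l" "lo r < hi r" using lo_lt_hi[OF w(1)] lo_lt_hi[OF w(2)] by auto
  have hr: "hi r \<le> n" using Node.prems by simp
  have hl: "hi l \<le> n" using lt w(3) hr by simp
  have sx: "nec_square (fst (eval sh l)) \<Longrightarrow> real (q (lo l)) = real (q (hi l))"
    using square_inv[OF cons w(1) hl] by simp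
  have sy: "nec_square (fst (eval sh r)) \<Longrightarrow> real (q (hi l)) = real (q (hi r))"
    using square_inv[OF cons w(2) hr] w(3) by simp
  note parts = cost_Node_parts[OF pos cb]
  let ?P = "phi \<beta> K lf (real (q (lo l))) (real (q (hi l))) (real (q (hi r)))"
  have lb: "c0 \<beta> * real (q (lo l)) * real (q (hi l)) * real (q (hi r)) \<le> ?P"
    by (rule phi_lb[OF pos cb sx sy]) auto
  have c0p: "0 \<le> c0 \<beta>" using c0_pos[OF pos] by simp
  have sqleaf: "inv (sh k) \<Longrightarrow> 1 \<le> k \<Longrightarrow> k \<le> n \<Longrightarrow> q (k - 1) = q k" for k
    using cons by (auto simp: consistent_def nec_square_def)
  show ?case
  proof (cases "i \<le> hi l")
    case True
    show ?thesis
    proof (cases "l = Leaf i")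
      case L: True
      have i1: "1 \<le> i" using w(1) L by simp
      have ql: "lo l = i - 1" "hi l = i" "fst (eval sh l) = sh i" using L by auto
      have "real (q m) \<le> real (q (hi r))" using mn hr by simp
      hence "c0 \<beta> * real (q (i-1)) * real (q i) * real (q m) \<le> c0 \<beta> * real (q (i-1)) * real (q i) * real (q (hi r))"
        by (intro mult_left_mono) (auto simp: c0p)
      note M = this
      have A: "c0 \<beta> * real (q (i-1)) * real (q i) * real (q m) \<le> cost \<beta> q (variant sh (Node l r))"
        using M lb parts(3)[of q] unfolding ql by linarith
      have B: "c1 \<beta> * real (q i)^3 \<le> cost \<beta> q (variant sh (Node l r))"
        if iv: "inv (sh i)" "\<not> is_tri (st (sh i))"
      proof -
        have "i \<le> n" using hl ql(2) by simp
        hence eq: "q (i - 1) = q i" using sqleaf[OF iv(1) i1] by simp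
        have cb': "combine (sh i) (fst (eval sh r)) = (z, K, lf)" using cb ql(3) by simp
        have ab: "real (q (lo l)) = real (q (hi l))" using eq ql(1,2) by simp
        have "c1 \<beta> * real (q (lo l))^3 \<le> ?P"
          by (rule phi_lbX[OF pos cb' iv ab sy]) auto
        hence "c1 \<beta> * real (q i)^3 \<le> ?P" using ql(1) eq by simp
        thus ?thesis using parts(3)[of q] by linarith
      qed
      show ?thesis using A B by blast
    next
      case False
      have "lo l < i" using Node.prems by simp
      with Node.IH(1)[OF w(1) hl _ True False] parts(1)[of q] show ?thesis by (meson order_trans)
    qed
  next
    case F: False
    show ?thesis
    proof (cases "r = Leaf i")
      case L: True
      have i1: "1 \<le> i" using w(2) L by simp
      have ql: "hi l = i - 1" "hi r = i" "fst (eval sh r) = sh i" using L w(3) by auto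
      have "real (q m) \<le> real (q (lo l))" using mn hl lt by simp
      hence "c0 \<beta> * real (q (i-1)) * real (q i) * real (q m) \<le> c0 \<beta> * real (q (lo l)) * real (q (i-1)) * real (q i)"
        using c0p by (simp add: mult_left_mono mult_right_mono mult.commute mult.left_commute)
      note M = this
      have A: "c0 \<beta> * real (q (i-1)) * real (q i) * real (q m) \<le> cost \<beta> q (variant sh (Node l r))"
        using M lb parts(3)[of q] unfolding ql by linarith
      have B: "c1 \<beta> * real (q i)^3 \<le> cost \<beta> q (variant sh (Node l r))"
        if iv: "inv (sh i)" "\<not> is_tri (st (sh i))"
      proof -
        have "i \<le> n" using hr ql(2) by simp
        hence eq: "q (i - 1) = q i" using sqleaf[OF iv(1) i1] by simp
        have cb': "combine (fst (eval sh l)) (sh i) = (z, K, lf)" using cb ql(3) by simp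
        have bc: "real (q (hi l)) = real (q (hi r))" using eq ql(1,2) by simp
        have "c1 \<beta> * real (q (hi r))^3 \<le> ?P"
          by (rule phi_lbY[OF pos cb' iv bc sx]) auto
        hence "c1 \<beta> * real (q i)^3 \<le> ?P" using ql(2) by simp
        thus ?thesis using parts(3)[of q] by linarith
      qed
      show ?thesis using A B by blast
    next
      case False
      have "lo r < i" "i \<le> hi r" using Node.prems F w(3) by auto
      with Node.IH(2)[OF w(2) hr _ _ False] parts(2)[of q] show ?thesis by (meson order_trans)
    qed
  qed
qed

lemma LB_final:
  assumes pos: "\<forall>K. \<beta> K > 0" and cons: "consistent sh n q" and mn: "\<forall>j\<le>n. q m \<le> q j"
    and w: "wf_tree (Node l r)" and lo: "lo (Node l r) = 0" and hi: "hi (Node l r) = n"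
  shows "c0 \<beta> * real (q 0) * real (q n) * real (q m) \<le> cost \<beta> q (variant sh (Node l r))"
proof -
  obtain z K lf where cb: "combine (fst (eval sh l)) (fst (eval sh r)) = (z, K, lf)"
    by (cases "combine (fst (eval sh l)) (fst (eval sh r))") auto
  have w: "wf_tree l" "wf_tree r" "hi l = lo r" using w by auto
  have lt: "lo l < hi l" "lo r < hi r" using lo_lt_hi[OF w(1)] lo_lt_hi[OF w(2)] by auto
  have hr: "hi r = n" using hi by simp
  have hl: "hi l \<le> n" using lt w(3) hr by simp
  have sx: "nec_square (fst (eval sh l)) \<Longrightarrow> real (q (lo l)) = real (q (hi l))"
    using square_inv[OF cons w(1) hl] by simp
  have sy: "nec_square (fst (eval sh r)) \<Longrightarrow> real (q (hi l)) = real (q (hi r))"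
    using square_inv[OF cons w(2)] hr w(3) by simp
  note parts = cost_Node_parts[OF pos cb]
  have lb: "c0 \<beta> * real (q (lo l)) * real (q (hi l)) * real (q (hi r)) \<le> phi \<beta> K lf (real (q (lo l))) (real (q (hi l))) (real (q (hi r)))"
    by (rule phi_lb[OF pos cb sx sy]) auto
  have c0p: "0 \<le> c0 \<beta>" using c0_pos[OF pos] by simp
  have "real (q m) \<le> real (q (hi l))" using mn hl by simp
  hence "c0 \<beta> * real (q 0) * real (q n) * real (q m) \<le> c0 \<beta> * real (q 0) * real (q n) * real (q (hi l))"
    using c0p by (intro mono4) auto
  hence M: "c0 \<beta> * real (q 0) * real (q n) * real (q m) \<le> c0 \<beta> * real (q (lo l)) * real (q (hi l)) * real (q (hi r))"
    using lo hr by (simp add: mult_ac)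
  show ?thesis using M lb parts(3)[of q] by linarith
qed




lemma stepD: "0 < (k1::real) \<Longrightarrow> 0 \<le> bm \<Longrightarrow> P \<le> bm*E \<Longrightarrow> k1*E \<le> 2*OPT \<Longrightarrow> P \<le> 2*bm/k1*OPT"
proof -
  assume h: "0 < k1" "0 \<le> bm" "P \<le> bm*E" "k1*E \<le> 2*OPT"
  have "E \<le> 2*OPT/k1" using h(1,4) by (simp add: pos_le_divide_eq mult.commute)
  hence "bm*E \<le> bm*(2*OPT/k1)" using h(2) by (rule mult_left_mono)
  thus ?thesis using h(3) by (simp add: mult_ac)
qed

lemma ar1: "0 \<le> (k1::real) \<Longrightarrow> k1 \<le> k0 \<Longrightarrow> 0 \<le> a \<Longrightarrow> 0 \<le> b \<Longrightarrow> 0 \<le> c \<Longrightarrow> k0*a*b*c \<le> OPT \<Longrightarrow> k1*(a*b*c) \<le> OPT"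
proof -
  assume h: "0 \<le> (k1::real)" "k1 \<le> k0" "0 \<le> a" "0 \<le> b" "0 \<le> c" "k0*a*b*c \<le> OPT"
  have "k1*(a*b*c) \<le> k0*(a*b*c)" using h by (intro mult_right_mono) auto
  thus ?thesis using h(6) by (simp add: mult.assoc)
qed

lemma minc: "0 \<le> (c::real) \<Longrightarrow> c \<le> a \<Longrightarrow> c \<le> b \<Longrightarrow> c^3 \<le> a*b*c \<and> c\<^sup>2*a \<le> a*b*c"
proof -
  assume h: "0 \<le> (c::real)" "c \<le> a" "c \<le> b"
  have "c*c \<le> a*b" using h by (intro mult_mono) auto
  hence 1: "c*c*c \<le> a*b*c" using h by (intro mult_right_mono) auto
  have "c*a \<le> b*a" using h by (intro mult_right_mono) auto
  hence 2: "c*a*c \<le> b*a*c" using h by (intro mult_right_mono) auto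
  show ?thesis using 1 2 by (simp add: power2_eq_square power3_eq_cube mult_ac)
qed

lemma mina: "0 \<le> (a::real) \<Longrightarrow> a \<le> b \<Longrightarrow> a \<le> c \<Longrightarrow> a^3 \<le> a*b*c \<and> a\<^sup>2*c \<le> a*b*c"
  using minc[of a c b] by (simp add: mult_ac)

definition Eexp :: "kernel \<Rightarrow> bool \<Rightarrow> real \<Rightarrow> real \<Rightarrow> real \<Rightarrow> real" where
  "Eexp K lf a b c = (if type2 K then (if lf then a^3 + a\<^sup>2*c else c^3 + c\<^sup>2*a) else a*b*c)"

lemma rtl_E:
  assumes "0 < (k1::real)" "k1 \<le> k0" "0 \<le> a" "0 \<le> b" "0 \<le> c" "c \<le> a" "c \<le> b"
    and H1: "k0*a*b*c \<le> OPT" and H3: "type2 K \<and> lf \<longrightarrow> a = b \<and> k1*b^3 \<le> OPT"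
  shows "k1 * Eexp K lf a b c \<le> 2*OPT"
proof -
  have o: "k1*(a*b*c) \<le> OPT" using ar1[OF _ assms(2-5) H1] assms(1) by simp
  have op: "0 \<le> k1*(a*b*c)" using assms by simp
  show ?thesis
  proof (cases "type2 K \<and> lf")
    case True
    hence ab: "a = b" "k1*b^3 \<le> OPT" using H3 by auto
    have "k1 * Eexp K lf a b c = k1*b^3 + k1*(a*b*c)" using True ab(1)
      by (simp add: Eexp_def power2_eq_square power3_eq_cube algebra_simps)
    thus ?thesis using ab o by simp
  next
    case False
    show ?thesis
    proof (cases "type2 K")
      case True
      with False have "\<not> lf" by simp
      have m: "c^3 \<le> a*b*c" "c\<^sup>2*a \<le> a*b*c" using minc[OF assms(5-7)] by auto
      have "k1 * (c^3 + c\<^sup>2*a) \<le> k1 * (2*(a*b*c))" using m assms(1) by (intro mult_left_mono) auto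
      thus ?thesis using True \<open>\<not> lf\<close> o by (simp add: Eexp_def)
    next
      case F2: False
      thus ?thesis using o op by (simp add: Eexp_def)
    qed
  qed
qed

lemma ltr_E:
  assumes "0 < (k1::real)" "k1 \<le> k0" "0 \<le> a" "0 \<le> b" "0 \<le> c" "a \<le> b" "a \<le> c"
    and H1: "k0*a*b*c \<le> OPT" and H3: "type2 K \<and> \<not> lf \<longrightarrow> b = c \<and> k1*c^3 \<le> OPT"
  shows "k1 * Eexp K lf a b c \<le> 2*OPT"
proof -
  have o: "k1*(a*b*c) \<le> OPT" using ar1[OF _ assms(2-5) H1] assms(1) by simp
  have op: "0 \<le> k1*(a*b*c)" using assms by simp
  show ?thesis
  proof (cases "type2 K \<and> \<not> lf")
    case True
    hence ab: "b = c" "k1*c^3 \<le> OPT" using H3 by auto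
    have "k1 * Eexp K lf a b c = k1*c^3 + k1*(a*b*c)" using True ab(1)
      by (simp add: Eexp_def power2_eq_square power3_eq_cube algebra_simps)
    thus ?thesis using ab o by simp
  next
    case False
    show ?thesis
    proof (cases "type2 K")
      case True
      with False have "lf" by simp
      have m: "a^3 \<le> a*b*c" "a\<^sup>2*c \<le> a*b*c" using mina[OF assms(3,6,7)] by auto
      have "k1 * (a^3 + a\<^sup>2*c) \<le> k1 * (2*(a*b*c))" using m assms(1) by (intro mult_left_mono) auto
      thus ?thesis using True \<open>lf\<close> o by (simp add: Eexp_def)
    next
      case F2: False
      thus ?thesis using o op by (simp add: Eexp_def)
    qed
  qed
qed

lemma fin_E:
  assumes "0 < (k1::real)" "k1 \<le> k0" "0 \<le> a" "0 \<le> b" "0 \<le> c" "b \<le> a" "b \<le> c"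
    and H1: "k0*a*b*c \<le> OPT" and H3: "type2 K \<and> lf \<longrightarrow> a = b" and H4: "type2 K \<and> \<not> lf \<longrightarrow> b = c"
  shows "k1 * Eexp K lf a b c \<le> 2*OPT"
proof -
  have o: "k1*(a*b*c) \<le> OPT" using ar1[OF _ assms(2-5) H1] assms(1) by simp
  have op: "0 \<le> k1*(a*b*c)" using assms by simp
  show ?thesis
  proof (cases "type2 K")
    case T: True
    show ?thesis
    proof (cases lf)
      case True
      hence "a = b" using H3 T by simp
      have m: "a^3 \<le> a*b*c" "a\<^sup>2*c \<le> a*b*c" using mina[OF assms(3)] \<open>a = b\<close> assms(7) by auto
      have "k1 * (a^3 + a\<^sup>2*c) \<le> k1 * (2*(a*b*c))" using m assms(1) by (intro mult_left_mono) auto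
      thus ?thesis using T True o by (simp add: Eexp_def)
    next
      case False
      hence "b = c" using H4 T by simp
      have m: "c^3 \<le> a*b*c" "c\<^sup>2*a \<le> a*b*c" using minc[OF assms(5)] \<open>b = c\<close> assms(6) by auto
      have "k1 * (c^3 + c\<^sup>2*a) \<le> k1 * (2*(a*b*c))" using m assms(1) by (intro mult_left_mono) auto
      thus ?thesis using T False o by (simp add: Eexp_def)
    qed
  next
    case F2: False
    thus ?thesis using o op by (simp add: Eexp_def)
  qed
qed




lemma rtl_props: "1 \<le> i \<Longrightarrow> wf_tree (rtl i k) \<and> lo (rtl i k) = i - 1 \<and> hi (rtl i k) = i + k"
  by (induction k arbitrary: i) auto

lemma ltr_props: "1 \<le> i \<Longrightarrow> wf_tree (ltr i k) \<and> lo (ltr i k) = i - 1 \<and> hi (ltr i k) = i + k"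
  by (induction k) auto

definition DD :: "(kernel \<Rightarrow> real) \<Rightarrow> real" where "DD \<beta> = 2 * Bm \<beta> / c1 \<beta>"

lemma DD_nonneg: "\<forall>K. \<beta> K > 0 \<Longrightarrow> 0 \<le> DD \<beta>"
  using c1_pos(1)[of \<beta>] Bm_ge(2)[of \<beta>] by (simp add: DD_def)

lemma top_ub:
  assumes pos: "\<forall>K. \<beta> K > 0" and E: "c1 \<beta> * Eexp K lf a b c \<le> 2*OPT" and nn: "0 \<le> a" "0 \<le> b" "0 \<le> c"
  shows "phi \<beta> K lf a b c \<le> DD \<beta> * OPT"
proof -
  have "phi \<beta> K lf a b c \<le> Bm \<beta> * Eexp K lf a b c" using phi_ub[OF nn] by (simp add: Eexp_def)
  from stepD[OF c1_pos(1)[OF pos] _ this E] Bm_ge(2)[of \<beta>] show ?thesis by (simp add: DD_def)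
qed

context
  fixes \<beta> sh n q m OPT
  assumes pos: "\<forall>K. \<beta> K > 0" and cons: "consistent sh n q" and mn: "\<forall>j\<le>n. q m \<le> q j"
    and L1: "\<forall>i. 1 \<le> i \<and> i \<le> n \<longrightarrow> c0 \<beta> * real (q (i-1)) * real (q i) * real (q m) \<le> OPT"
    and L3: "\<forall>i. 1 \<le> i \<and> i \<le> n \<longrightarrow> inv (sh i) \<and> \<not> is_tri (st (sh i)) \<longrightarrow> c1 \<beta> * real (q i)^3 \<le> OPT"
begin

lemma sqleaf: "inv (sh k) \<Longrightarrow> 1 \<le> k \<Longrightarrow> k \<le> n \<Longrightarrow> q (k - 1) = q k"
  using cons by (auto simp: consistent_def nec_square_def)

lemma rtl_ub: "1 \<le> i \<Longrightarrow> i + k \<le> n \<Longrightarrow> q (i+k) = q m \<Longrightarrow>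
   cost \<beta> q (variant sh (rtl i k)) \<le> real k * DD \<beta> * OPT"
proof (induction k arbitrary: i)
  case 0 then show ?case by simp
next
  case (Suc k)
  let ?Y = "fst (eval sh (rtl (Suc i) k))"
  obtain z K lf where cb0: "combine (fst (eval sh (Leaf i))) ?Y = (z, K, lf)"
    by (cases "combine (fst (eval sh (Leaf i))) ?Y") auto
  have cb: "combine (sh i) ?Y = (z, K, lf)" using cb0 by simp
  have rp: "hi (rtl (Suc i) k) = Suc i + k" using rtl_props[of "Suc i" k] by simp
  have v: "variant sh (rtl i (Suc k)) = variant sh (rtl (Suc i) k) @ [(K, lf, i - 1, i, Suc i + k)]"
    using variant_Node[OF cb0] rp by simp
  have IH: "cost \<beta> q (variant sh (rtl (Suc i) k)) \<le> real k * DD \<beta> * OPT"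
    using Suc by (intro Suc.IH) auto
  let ?a = "real (q (i-1))" and ?b = "real (q i)" and ?c = "real (q (Suc i + k))"
  have cm: "?c = real (q m)" using Suc.prems by simp
  have H1: "c0 \<beta> * ?a * ?b * ?c \<le> OPT" using L1 Suc.prems cm by auto
  have H3: "type2 K \<and> lf \<longrightarrow> ?a = ?b \<and> c1 \<beta> * ?b^3 \<le> OPT"
  proof
    assume t: "type2 K \<and> lf"
    hence iv: "inv (sh i)" "\<not> is_tri (st (sh i))" using C2[of "sh i" ?Y z K] cb by auto
    show "?a = ?b \<and> c1 \<beta> * ?b^3 \<le> OPT" using sqleaf[OF iv(1)] L3 iv Suc.prems by auto
  qed
  have le: "?c \<le> ?a" "?c \<le> ?b" using mn Suc.prems cm by auto
  have "c1 \<beta> * Eexp K lf ?a ?b ?c \<le> 2*OPT"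
    by (rule rtl_E[OF c1_pos(1,2)[OF pos] _ _ _ le H1 H3]) auto
  hence P: "phi \<beta> K lf ?a ?b ?c \<le> DD \<beta> * OPT" by (intro top_ub[OF pos]) auto
  show ?case using IH P v by (simp add: algebra_simps)
qed

lemma ltr_ub: "1 \<le> i \<Longrightarrow> i + k \<le> n \<Longrightarrow> q (i-1) = q m \<Longrightarrow>
   cost \<beta> q (variant sh (ltr i k)) \<le> real k * DD \<beta> * OPT"
proof (induction k)
  case 0 then show ?case by simp
next
  case (Suc k)
  let ?X = "fst (eval sh (ltr i k))"
  let ?j = "i + Suc k"
  obtain z K lf where cb0: "combine ?X (fst (eval sh (Leaf ?j))) = (z, K, lf)"
    by (cases "combine ?X (fst (eval sh (Leaf ?j)))") auto
  have cb: "combine ?X (sh ?j) = (z, K, lf)" using cb0 by simp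
  have rp: "lo (ltr i k) = i - 1" "hi (ltr i k) = i + k" using ltr_props[of i k] Suc.prems by auto
  have v: "variant sh (ltr i (Suc k)) = variant sh (ltr i k) @ [(K, lf, i - 1, i + k, ?j)]"
    using variant_Node[OF cb0] rp by simp
  have IH: "cost \<beta> q (variant sh (ltr i k)) \<le> real k * DD \<beta> * OPT"
    using Suc by (intro Suc.IH) auto
  let ?a = "real (q (i-1))" and ?b = "real (q (i+k))" and ?c = "real (q ?j)"
  have cm: "?a = real (q m)" using Suc.prems by simp
  have jm: "?j - 1 = i + k" by simp
  have H1: "c0 \<beta> * ?a * ?b * ?c \<le> OPT" using L1[rule_format, of ?j] Suc.prems cm jm
    by (simp add: mult_ac)
  have H3: "type2 K \<and> \<not> lf \<longrightarrow> ?b = ?c \<and> c1 \<beta> * ?c^3 \<le> OPT"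
  proof
    assume t: "type2 K \<and> \<not> lf"
    hence iv: "inv (sh ?j)" "\<not> is_tri (st (sh ?j))" using C3[of ?X "sh ?j" z K] cb by auto
    have "q (?j - 1) = q ?j" using sqleaf[OF iv(1)] Suc.prems by simp
    thus "?b = ?c \<and> c1 \<beta> * ?c^3 \<le> OPT" using L3 iv Suc.prems jm by auto
  qed
  have le: "?a \<le> ?b" "?a \<le> ?c" using mn Suc.prems cm by auto
  have "c1 \<beta> * Eexp K lf ?a ?b ?c \<le> 2*OPT"
    by (rule ltr_E[OF c1_pos(1,2)[OF pos] _ _ _ le H1 H3]) auto
  hence P: "phi \<beta> K lf ?a ?b ?c \<le> DD \<beta> * OPT" by (intro top_ub[OF pos]) auto
  show ?case using IH P v by (simp add: algebra_simps)
qed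

end




lemma fanout_ub:
  assumes pos: "\<forall>K. \<beta> K > 0" and cons: "consistent sh n q" and mn: "\<forall>j\<le>n. q m \<le> q j"
    and L1: "\<forall>i. 1 \<le> i \<and> i \<le> n \<longrightarrow> c0 \<beta> * real (q (i-1)) * real (q i) * real (q m) \<le> OPT"
    and L3: "\<forall>i. 1 \<le> i \<and> i \<le> n \<longrightarrow> inv (sh i) \<and> \<not> is_tri (st (sh i)) \<longrightarrow> c1 \<beta> * real (q i)^3 \<le> OPT"
    and L2: "c0 \<beta> * real (q 0) * real (q n) * real (q m) \<le> OPT"
    and n1: "1 \<le> n" and mle: "m \<le> n" and opt: "0 \<le> OPT"
  shows "cost \<beta> q (variant sh (fanout n m)) \<le> real n * DD \<beta> * OPT"
proof -
  have DO: "0 \<le> DD \<beta> * OPT" using DD_nonneg[OF pos] opt by simp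
  have nn: "real (n - 1) * DD \<beta> * OPT \<le> real n * DD \<beta> * OPT"
    using mult_right_mono[OF _ DO, of "real (n-1)" "real n"] by (simp add: mult.assoc)
  note ctx = pos cons mn L1 L3
  show ?thesis
  proof (cases "m = 0")
    case True
    hence "fanout n m = ltr 1 (n - 1)" by (simp add: fanout_def)
    moreover have "cost \<beta> q (variant sh (ltr 1 (n - 1))) \<le> real (n - 1) * DD \<beta> * OPT"
      using ltr_ub[OF ctx, of 1 "n - 1"] n1 True by simp
    ultimately show ?thesis using nn by simp
  next
    case m0: False
    show ?thesis
    proof (cases "m = n")
      case True
      hence "fanout n m = rtl 1 (n - 1)" using m0 by (simp add: fanout_def)
      moreover have "cost \<beta> q (variant sh (rtl 1 (n - 1))) \<le> real (n - 1) * DD \<beta> * OPT"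
        using rtl_ub[OF ctx, of 1 "n - 1"] n1 True by simp
      ultimately show ?thesis using nn by simp
    next
      case False
      let ?l = "rtl 1 (m - 1)" and ?r = "ltr (m + 1) (n - m - 1)"
      have f: "fanout n m = Node ?l ?r" using m0 False by (simp add: fanout_def)
      have mlt: "m < n" using mle False by simp
      have lp: "wf_tree ?l" "lo ?l = 0" "hi ?l = m" using rtl_props[of 1 "m - 1"] m0 by auto
      have rp: "wf_tree ?r" "lo ?r = m" "hi ?r = n" using ltr_props[of "m+1" "n - m - 1"] mlt by auto
      obtain z K lf where cb: "combine (fst (eval sh ?l)) (fst (eval sh ?r)) = (z, K, lf)"
        by (cases "combine (fst (eval sh ?l)) (fst (eval sh ?r))") auto
      have v: "variant sh (fanout n m) = variant sh ?l @ variant sh ?r @ [(K, lf, 0, m, n)]"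
        using variant_Node[OF cb] lp rp f by simp
      have c1: "cost \<beta> q (variant sh ?l) \<le> real (m - 1) * DD \<beta> * OPT"
        using rtl_ub[OF ctx, of 1 "m - 1"] m0 mle by simp
      have c2: "cost \<beta> q (variant sh ?r) \<le> real (n - m - 1) * DD \<beta> * OPT"
        using ltr_ub[OF ctx, of "m+1" "n - m - 1"] mlt by simp
      let ?a = "real (q 0)" and ?b = "real (q m)" and ?c = "real (q n)"
      have H1: "c0 \<beta> * ?a * ?b * ?c \<le> OPT" using L2 by (simp add: mult_ac)
      have H3: "type2 K \<and> lf \<longrightarrow> ?a = ?b"
      proof
        assume "type2 K \<and> lf"
        hence "inv (fst (eval sh ?l))" using C2[of _ _ z K] cb by auto
        hence "nec_square (fst (eval sh ?l))" by (simp add: nec_square_def)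
        thus "?a = ?b" using square_inv[OF cons lp(1)] lp mle by simp
      qed
      have H4: "type2 K \<and> \<not> lf \<longrightarrow> ?b = ?c"
      proof
        assume "type2 K \<and> \<not> lf"
        hence "inv (fst (eval sh ?r))" using C3[of _ _ z K] cb by auto
        hence "nec_square (fst (eval sh ?r))" by (simp add: nec_square_def)
        thus "?b = ?c" using square_inv[OF cons rp(1)] rp by simp
      qed
      have le: "?b \<le> ?a" "?b \<le> ?c" using mn by auto
      have "c1 \<beta> * Eexp K lf ?a ?b ?c \<le> 2*OPT"
        by (rule fin_E[OF c1_pos(1,2)[OF pos] _ _ _ le H1 H3 H4]) auto
      hence P: "phi \<beta> K lf ?a ?b ?c \<le> DD \<beta> * OPT" by (intro top_ub[OF pos]) auto
      have "cost \<beta> q (variant sh (fanout n m)) \<le> (real (m - 1) + real (n - m - 1) + 1) * DD \<beta> * OPT"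
        using c1 c2 P v by (simp add: algebra_simps)
      also have "real (m - 1) + real (n - m - 1) + 1 = real (n - 1)" using m0 mlt by simp
      finally show ?thesis using nn by simp
    qed
  qed
qed




lemma all_variants_finite: "finite (all_variants sh n)"
proof -
  let ?A = "(UNIV :: kernel set) \<times> (UNIV :: bool set) \<times> {..n} \<times> {..n} \<times> {..n}"
  have fA: "finite ?A" using finite_kernel by simp
  have "all_variants sh n \<subseteq> {xs. set xs \<subseteq> ?A \<and> length xs \<le> n}"
  proof
    fix xs assume "xs \<in> all_variants sh n"
    then obtain t where t: "wf_tree t" "lo t = 0" "hi t = n" "xs = variant sh t"
      by (auto simp: all_variants_def)
    from variant_length_idx[OF t(1), of sh] t show "xs \<in> {xs. set xs \<subseteq> ?A \<and> length xs \<le> n}"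
      by (force split: prod.splits)
  qed
  moreover have "finite {xs. set xs \<subseteq> ?A \<and> length xs \<le> n}" by (rule finite_lists_length_le[OF fA])
  ultimately show ?thesis by (rule finite_subset)
qed

theorem theorem1:
  fixes n :: nat and sh :: "nat \<Rightarrow> operand" and \<beta> :: "kernel \<Rightarrow> real"
  assumes "n \<ge> 1"
    and "valid_shape sh n"
    and "\<forall>K. \<beta> K > 0"
  shows "\<exists>C. \<forall>q. consistent sh n q \<longrightarrow>
           penalty \<beta> q (fanout_variants sh n) (all_variants sh n) \<le> C"
proof (intro exI allI impI)
  fix q assume cons: "consistent sh n q"
  note pos = assms(3)
  have n1: "1 \<le> n" using assms(1) .
  obtain m where m: "m \<le> n" "\<forall>j\<le>n. q m \<le> q j"
  proof -
    have "Min (q ` {0..n}) \<in> q ` {0..n}" by (intro Min_in) auto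
    then obtain m where "Min (q ` {0..n}) = q m" "m \<in> {0..n}" by (rule imageE)
    moreover have "\<forall>j\<le>n. Min (q ` {0..n}) \<le> q j" by auto
    ultimately show ?thesis using that by auto
  qed
  let ?AV = "cost \<beta> q ` all_variants sh n"
  have ltr0: "wf_tree (ltr 1 (n - 1)) \<and> lo (ltr 1 (n - 1)) = 0 \<and> hi (ltr 1 (n - 1)) = n"
    using ltr_props[of 1 "n - 1"] n1 by simp
  have ne: "?AV \<noteq> {}" using ltr0 by (auto simp: all_variants_def)
  have fin: "finite ?AV" using all_variants_finite by simp
  define OPT where "OPT = Min ?AV"
  have "OPT \<in> ?AV" unfolding OPT_def using fin ne by (rule Min_in)
  then obtain T where T: "wf_tree T" "lo T = 0" "hi T = n" "OPT = cost \<beta> q (variant sh T)"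
    by (auto simp: all_variants_def)
  have opt: "0 \<le> OPT" using T(4) cost_nonneg[OF pos] by simp
  have fv: "fanout_variants sh n = (\<lambda>h. variant sh (fanout n h)) ` {..n}"
    by (auto simp: fanout_variants_def)
  define FF where "FF = Min (cost \<beta> q ` fanout_variants sh n)"
  have FFle: "FF \<le> cost \<beta> q (variant sh (fanout n m))"
    unfolding FF_def fv using m(1) by (intro Min_le) auto
  have key: "cost \<beta> q (variant sh (fanout n m)) \<le> real n * DD \<beta> * OPT"
  proof (cases "n = 1")
    case True
    hence "fanout n m = Leaf 1" using m(1) by (cases m) (auto simp: fanout_def)
    thus ?thesis using DD_nonneg[OF pos] opt by simp
  next
    case False
    hence n2: "2 \<le> n" using n1 by simp
    obtain l r where lr: "T = Node l r"
    proof (cases T)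
      case (Leaf k) then show ?thesis using T n2 by simp
    next
      case (Node l r) then show ?thesis using that by simp
    qed
    have L1: "\<forall>i. 1 \<le> i \<and> i \<le> n \<longrightarrow> c0 \<beta> * real (q (i-1)) * real (q i) * real (q m) \<le> OPT"
      using LB_leaf[OF pos cons m(2) T(1)] T lr by auto
    have L3: "\<forall>i. 1 \<le> i \<and> i \<le> n \<longrightarrow> inv (sh i) \<and> \<not> is_tri (st (sh i)) \<longrightarrow> c1 \<beta> * real (q i)^3 \<le> OPT"
      using LB_leaf[OF pos cons m(2) T(1)] T lr by auto
    have L2: "c0 \<beta> * real (q 0) * real (q n) * real (q m) \<le> OPT"
      using LB_final[OF pos cons m(2), of l r] T lr by simp
    show ?thesis by (rule fanout_ub[OF pos cons m(2) L1 L3 L2 n1 m(1) opt])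
  qed
  have "FF / OPT \<le> real n * DD \<beta>"
  proof (cases "OPT = 0")
    case True thus ?thesis using DD_nonneg[OF pos] by simp
  next
    case False
    hence "0 < OPT" using opt by simp
    thus ?thesis using FFle key by (simp add: divide_le_eq)
  qed
  thus "penalty \<beta> q (fanout_variants sh n) (all_variants sh n) \<le> real n * DD \<beta> - 1"
    unfolding penalty_def FF_def[symmetric] OPT_def[symmetric] by simp
qed


end
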